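(* Let $\mathcal{X}$ be a finite-dimensional real Hilbert space with norm $\|\cdot\|$. Let $\mathbb{P}_{\mathrm{true}}$ be a probability distribution on $\mathcal{X}$ whose support $\mathcal{M}=\mathrm{supp}(\mathbb{P}_{\mathrm{true}})$ is a convex, compact set. Let $\{\mathbb{P}^k\}_{k\in\mathbb{N}}$ be probability distributions on $\mathcal{X}$ such that, for all $k\in\mathbb{N}$, $(P_{\mathcal{M}})_\#\mathbb{P}^k=\mathbb{P}_{\mathrm{true}}$ (up to a set of measure zero). Let $\Gamma$ be the set of nonnegative $1$-Lipschitz functions $f:\mathcal{X}\to\mathbb{R}$. Then for all $k\in\mathbb{N}$, $\tau\in[0,\infty)$ and $p\in[1,\infty)$, the distance function $d_{\mathcal{M}}$ is a solution to $$\min_{f\in\Gamma}\; \mathbb{E}_{u\sim\mathbb{P}_{\mathrm{true}}}\big[f(u)+\tau f(u)^p\big]-\mathbb{E}_{u^k\sim\mathbb{P}^k}\big[f(u^k)\big].$$ Moreover, when $\tau>0$, the restriction of each minimizer $f^\star$ of this problem to the support of $\mathbb{P}^k$ is unique, i.e. $f^\star(u^k)=d_{\mathcal{M}}(u^k)$ for all $u^k\in\mathrm{supp}(\mathbb{P}^k)$.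
   Context: For a convex compact set $\mathcal{M}\subset\mathcal{X}$, $P_{\mathcal{M}}(u)=\arg\min_{v\in\mathcal{M}}\|v-u\|$ is the metric projection and $d_{\mathcal{M}}(u)=\inf_{v\in\mathcal{M}}\|v-u\|=\|P_{\mathcal{M}}(u)-u\|$ is the pointwise distance function. For a map $T$ and a probability measure $\mathbb{Q}$, $T_\#\mathbb{Q}$ denotes the push-forward measure, $T_\#\mathbb{Q}[U]=\mathbb{Q}[T^{-1}(U)]$.
   Formalization: For $\tau>0$, uniqueness of minimizers on the support of $\mathbb{P}^k$ is claimed only when $\mathbb{P}^k$ has finite first moment, that is, $\mathbb{E}_{u^k\sim\mathbb{P}^k}[\|u^k\|] < \infty$. The statement above fails without it. *)

theory Defs
  imports "HOL-Analysis.Analysis" "HOL-Probability.Probability"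
begin

text \<open>Support of a Borel measure: the set of points all of whose open
  neighbourhoods have positive measure (the smallest closed set of full measure
  in a second countable space).\<close>
definition support :: "'a::topological_space measure \<Rightarrow> 'a set" where
  "support \<mu> = {x. \<forall>U. open U \<and> x \<in> U \<longrightarrow> emeasure \<mu> U > 0}"

definition Gamma :: "('a::metric_space \<Rightarrow> real) set" where
  "Gamma = {f. (\<forall>x. 0 \<le> f x) \<and> 1-lipschitz_on UNIV f}"

text \<open>Both expectations are of nonnegative functions, hence always well defined in
  [0,\<infinity>]; the difference is taken in the extended reals.\<close>
definition objective ::
  "'a measure \<Rightarrow> 'a measure \<Rightarrow> real \<Rightarrow> real \<Rightarrow> ('a \<Rightarrow> real) \<Rightarrow> ereal" where
  "objective Ptrue Pk \<tau> p f =
     enn2ereal (\<integral>\<^sup>+ u. ennreal (f u + \<tau> * f u powr p) \<partial>Ptrue)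
     - enn2ereal (\<integral>\<^sup>+ u. ennreal (f u) \<partial>Pk)"

end

theory Submission
  imports Defs
begin

lemma ereal_aux1:
  fixes x y z :: ennreal assumes "x \<le> y + z"
  shows "- enn2ereal z \<le> enn2ereal y - enn2ereal x"
  by (metis assms enn2ereal_nonneg ereal_diff_add_assoc2 ereal_diff_positive
    ereal_minus(8) ereal_minus_le_iff less_eq_ennreal.rep_eq
    not_MInfty_nonneg plus_ennreal.rep_eq)

lemma ereal_aux2:
  fixes x y z :: ennreal assumes "x < \<infinity>" "z < \<infinity>"
    and "enn2ereal y - enn2ereal x \<le> - enn2ereal z"
  shows "y + z \<le> x"
proof -
  obtain a where a: "x = ennreal a" "a \<ge> 0" using assms(1) by (cases x rule: ennreal_cases) auto
  obtain c where c: "z = ennreal c" "c \<ge> 0" using assms(2) by (cases z rule: ennreal_cases) auto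
  show ?thesis
  proof (cases y rule: ennreal_cases)
    case (real b)
    then show ?thesis using assms(3) a c
      by (smt (verit) enn2ereal_ennreal ennreal_le_iff ennreal_plus
        ereal_less_eq(3) ereal_minus(1,8) zero_ereal_def)
  next
    case top
    then show ?thesis using assms(3) a c by simp
  qed
qed

lemma fin_int:
  fixes Q :: "'a::euclidean_space measure"
  assumes Q: "prob_space Q" "sets Q = sets borel"
    and fin: "(\<integral>\<^sup>+ u. ennreal (norm u) \<partial>Q) < \<infinity>"
    and c: "c \<ge> 0" and g: "\<And>u. g u \<le> c + norm u"
  shows "(\<integral>\<^sup>+ u. ennreal (g u) \<partial>Q) < \<infinity>"
proof -
  have nm: "(\<lambda>u. ennreal (norm u)) \<in> borel_measurable Q"
    unfolding measurable_cong_sets[OF Q(2) refl, of borel] by simp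
  have "(\<integral>\<^sup>+ u. ennreal (g u) \<partial>Q) \<le> (\<integral>\<^sup>+ u. ennreal c + ennreal (norm u) \<partial>Q)"
    by (rule nn_integral_mono) (use g c in \<open>simp add: ennreal_plus[symmetric] ennreal_leI del: ennreal_plus\<close>)
  also have "\<dots> = (\<integral>\<^sup>+ u. ennreal c \<partial>Q) + (\<integral>\<^sup>+ u. ennreal (norm u) \<partial>Q)"
    by (rule nn_integral_add) (use nm in simp_all)
  also have "\<dots> = ennreal c + (\<integral>\<^sup>+ u. ennreal (norm u) \<partial>Q)"
    using Q(1) by (simp add: prob_space.emeasure_space_1)
  also have "\<dots> < \<infinity>" using fin by simp
  finally show ?thesis .
qed

lemma gamma_cont: "f \<in> Gamma \<Longrightarrow> continuous_on UNIV f"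
  unfolding Gamma_def by (auto intro: lipschitz_on_continuous_on)

lemma gamma_meas: "f \<in> Gamma \<Longrightarrow> f \<in> borel_measurable borel"
  by (rule borel_measurable_continuous_onI[OF gamma_cont])

lemma gamma_ineq:
  assumes "f \<in> Gamma" shows "f u \<le> f v + dist u v"
proof -
  have "dist (f u) (f v) \<le> 1 * dist u v"
    using assms lipschitz_onD[of 1 UNIV f u v] unfolding Gamma_def by auto
  then show ?thesis by (simp add: dist_real_def)
qed

lemma infdist_gamma: "(\<lambda>u. infdist u M) \<in> Gamma"
  unfolding Gamma_def
  by (auto simp: infdist_nonneg lipschitz_on_def dist_real_def infdist_triangle_abs)

lemma support_nonempty_closest:
  fixes M :: "'a::euclidean_space set"
  assumes "prob_space Q" "sets Q = sets borel" "M = support Ptrue"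
    and "distr Q borel (closest_point M) = Ptrue"
  shows "M \<noteq> {}"
proof
  assume M0: "M = {}"
  define c :: 'a where "c = (SOME x. False)"
  have cp: "closest_point M = (\<lambda>_. c)"
    using M0 by (auto simp: closest_point_def c_def)
  have "c \<in> support Ptrue"
    unfolding support_def
  proof (intro CollectI allI impI)
    fix U :: "'a set" assume U: "open U \<and> c \<in> U"
    have "emeasure Ptrue U = emeasure Q ((\<lambda>_. c) -` U \<inter> space Q)"
      using assms(4)[symmetric] cp U by (simp add: emeasure_distr)
    also have "\<dots> = emeasure Q (space Q)" using U by simp
    also have "\<dots> = 1" using assms(1) by (simp add: prob_space.emeasure_space_1)
    finally show "emeasure Ptrue U > 0" by simp
  qed
  then show False using M0 assms(3) by simp
qed

lemma key:
  fixes M :: "'a::euclidean_space set"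
  assumes Q: "prob_space Q" "sets Q = sets borel"
    and M: "M \<noteq> {}" "closed M" "convex M"
    and PT: "Ptrue = distr Q borel (closest_point M)"
    and f: "f \<in> Gamma" and tau: "\<tau> \<ge> 0"
  shows "objective Ptrue Q \<tau> p f =
      enn2ereal (\<integral>\<^sup>+ u. ennreal (f (closest_point M u) + \<tau> * f (closest_point M u) powr p) \<partial>Q)
      - enn2ereal (\<integral>\<^sup>+ u. ennreal (f u) \<partial>Q)"
    and "(\<integral>\<^sup>+ u. ennreal (f u) \<partial>Q) \<le>
      (\<integral>\<^sup>+ u. ennreal (f (closest_point M u) + \<tau> * f (closest_point M u) powr p) \<partial>Q)
      + (\<integral>\<^sup>+ u. ennreal (infdist u M) \<partial>Q)"
    and "objective Ptrue Q \<tau> p (\<lambda>u. infdist u M) = - enn2ereal (\<integral>\<^sup>+ u. ennreal (infdist u M) \<partial>Q)"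
proof -
  let ?\<pi> = "closest_point M"
  have pim: "?\<pi> \<in> Q \<rightarrow>\<^sub>M borel"
    unfolding measurable_cong_sets[OF Q(2) refl, of borel]
    by (rule borel_measurable_continuous_onI[OF continuous_on_closest_point[OF M(3) M(2) M(1)]])
  have dpi: "infdist u M = dist u (?\<pi> u)" for u
  proof -
    obtain y where y: "y \<in> M" "infdist u M = dist u y" using infdist_attains_inf[OF M(2) M(1)] by blast
    have "dist u (?\<pi> u) \<le> dist u y" using closest_point_le[OF M(2) y(1)] .
    moreover have "infdist u M \<le> dist u (?\<pi> u)" by (rule infdist_le[OF closest_point_in_set[OF M(2) M(1)]])
    ultimately show ?thesis using y by simp
  qed
  have obj: "objective Ptrue Q \<tau> p g =
      enn2ereal (\<integral>\<^sup>+ u. ennreal (g (?\<pi> u) + \<tau> * g (?\<pi> u) powr p) \<partial>Q)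
      - enn2ereal (\<integral>\<^sup>+ u. ennreal (g u) \<partial>Q)" if g: "g \<in> Gamma" for g
  proof -
    have gm: "g \<in> borel_measurable borel" by (rule gamma_meas[OF g])
    have "(\<lambda>u. ennreal (g u + \<tau> * g u powr p)) \<in> borel_measurable (distr Q borel ?\<pi>)"
      using gm by simp
    then show ?thesis unfolding objective_def PT
      by (simp add: nn_integral_distr[OF pim])
  qed
  show "objective Ptrue Q \<tau> p f =
      enn2ereal (\<integral>\<^sup>+ u. ennreal (f (closest_point M u) + \<tau> * f (closest_point M u) powr p) \<partial>Q)
      - enn2ereal (\<integral>\<^sup>+ u. ennreal (f u) \<partial>Q)" by (rule obj[OF f])
  have d0: "infdist (?\<pi> u) M = 0" for u by (rule infdist_zero[OF closest_point_in_set[OF M(2) M(1)]])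
  show "objective Ptrue Q \<tau> p (\<lambda>u. infdist u M) = - enn2ereal (\<integral>\<^sup>+ u. ennreal (infdist u M) \<partial>Q)"
    using obj[OF infdist_gamma] d0 by (simp add: zero_ennreal.rep_eq)
  have fm: "f \<in> borel_measurable Q"
    unfolding measurable_cong_sets[OF Q(2) refl, of borel] by (rule gamma_meas[OF f])
  have dm: "(\<lambda>u. infdist u M) \<in> borel_measurable Q"
    unfolding measurable_cong_sets[OF Q(2) refl, of borel] by (rule gamma_meas[OF infdist_gamma])
  have fpm: "(\<lambda>u. f (?\<pi> u)) \<in> borel_measurable Q"
    using measurable_compose[OF pim gamma_meas[OF f]] by simp
  have fnn: "0 \<le> f x" for x using f unfolding Gamma_def by auto
  have "(\<integral>\<^sup>+ u. ennreal (f u) \<partial>Q) \<le>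
      (\<integral>\<^sup>+ u. ennreal (f (?\<pi> u) + \<tau> * f (?\<pi> u) powr p) + ennreal (infdist u M) \<partial>Q)"
  proof (rule nn_integral_mono)
    fix u
    have "f u \<le> f (?\<pi> u) + infdist u M" using gamma_ineq[OF f, of u "?\<pi> u"] dpi[of u] by simp
    also have "\<dots> \<le> f (?\<pi> u) + \<tau> * f (?\<pi> u) powr p + infdist u M"
      using tau by simp
    finally have fin: "f u \<le> f (?\<pi> u) + \<tau> * f (?\<pi> u) powr p + infdist u M" .
    show "ennreal (f u) \<le> ennreal (f (?\<pi> u) + \<tau> * f (?\<pi> u) powr p) + ennreal (infdist u M)"
    proof -
      have nn: "0 \<le> f (?\<pi> u) + \<tau> * f (?\<pi> u) powr p" using fnn tau by simp
      have "ennreal (f (?\<pi> u) + \<tau> * f (?\<pi> u) powr p) + ennreal (infdist u M)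
          = ennreal (f (?\<pi> u) + \<tau> * f (?\<pi> u) powr p + infdist u M)"
        using nn infdist_nonneg by (rule ennreal_plus[symmetric])
      with fin show ?thesis by (simp add: ennreal_leI)
    qed
  qed
  also have "\<dots> = (\<integral>\<^sup>+ u. ennreal (f (?\<pi> u) + \<tau> * f (?\<pi> u) powr p) \<partial>Q)
      + (\<integral>\<^sup>+ u. ennreal (infdist u M) \<partial>Q)"
    by (rule nn_integral_add) (use fpm dm in simp_all)
  finally show "(\<integral>\<^sup>+ u. ennreal (f u) \<partial>Q) \<le>
      (\<integral>\<^sup>+ u. ennreal (f (closest_point M u) + \<tau> * f (closest_point M u) powr p) \<partial>Q)
      + (\<integral>\<^sup>+ u. ennreal (infdist u M) \<partial>Q)" .
qed

theorem theorem3p1: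
  fixes Ptrue :: "'a::euclidean_space measure"
    and P :: "nat \<Rightarrow> 'a measure"
    and M :: "'a set"
  assumes "prob_space Ptrue" and "sets Ptrue = sets borel"
    and "\<And>k. prob_space (P k)" and "\<And>k. sets (P k) = sets borel"
    and "M = support Ptrue" and "convex M" and "compact M"
    and "\<And>k. distr (P k) borel (closest_point M) = Ptrue"
  shows "(\<forall>k. \<forall>\<tau>\<ge>0. \<forall>p\<ge>1.
           (\<lambda>u. infdist u M) \<in> Gamma \<and>
           (\<forall>f\<in>Gamma. objective Ptrue (P k) \<tau> p (\<lambda>u. infdist u M)
                         \<le> objective Ptrue (P k) \<tau> p f)) \<and>
         (\<forall>k. \<forall>\<tau>>0. \<forall>p\<ge>1. \<forall>f.
           (\<integral>\<^sup>+ u. ennreal (norm u) \<partial>P k) < \<infinity> \<and>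
           f \<in> Gamma \<and> (\<forall>g\<in>Gamma. objective Ptrue (P k) \<tau> p f \<le> objective Ptrue (P k) \<tau> p g)
           \<longrightarrow> (\<forall>u\<in>support (P k). f u = infdist u M))"
proof -
  have Mne: "M \<noteq> {}"
    using support_nonempty_closest[OF assms(3)[of 0] assms(4)[of 0] assms(5) assms(8)[of 0]] .
  have clM: "closed M" using assms(7) by (rule compact_imp_closed)
  let ?\<pi> = "closest_point M"
  have PT: "Ptrue = distr (P k) borel ?\<pi>" for k using assms(8)[of k] by simp
  note K = key[OF assms(3) assms(4) Mne clM assms(6) PT]
  show ?thesis
  proof (intro conjI allI impI ballI)
    show "(\<lambda>u. infdist u M) \<in> Gamma" for k :: nat by (rule infdist_gamma)
    fix k :: nat and \<tau> p :: real and f :: "'a \<Rightarrow> real"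
    assume tau: "\<tau> \<ge> 0" and f: "f \<in> Gamma"
    show "objective Ptrue (P k) \<tau> p (\<lambda>u. infdist u M) \<le> objective Ptrue (P k) \<tau> p f"
      unfolding K(1)[OF f tau] K(3)[OF f tau]
      by (rule ereal_aux1[OF K(2)[OF f tau]])
  next
    fix k :: nat and \<tau> p :: real and f :: "'a \<Rightarrow> real" and u :: 'a
    assume tau: "\<tau> > 0" and "p \<ge> 1"
      and H: "(\<integral>\<^sup>+ u. ennreal (norm u) \<partial>P k) < \<infinity> \<and>
           f \<in> Gamma \<and> (\<forall>g\<in>Gamma. objective Ptrue (P k) \<tau> p f \<le> objective Ptrue (P k) \<tau> p g)"
      and u: "u \<in> support (P k)"
    define Q where "Q = P k"
    have Q: "prob_space Q" "sets Q = sets borel" using assms(3,4) Q_def by auto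
    have fin: "(\<integral>\<^sup>+ u. ennreal (norm u) \<partial>Q) < \<infinity>" and f: "f \<in> Gamma"
      and opt: "objective Ptrue Q \<tau> p f \<le> objective Ptrue Q \<tau> p (\<lambda>u. infdist u M)"
      using H infdist_gamma Q_def by auto
    have tau0: "\<tau> \<ge> 0" using tau by simp
    define A where "A = (\<integral>\<^sup>+ u. ennreal (f (?\<pi> u) + \<tau> * f (?\<pi> u) powr p) \<partial>Q)"
    define B where "B = (\<integral>\<^sup>+ u. ennreal (f u) \<partial>Q)"
    define D where "D = (\<integral>\<^sup>+ u. ennreal (infdist u M) \<partial>Q)"
    have fnn: "0 \<le> f x" for x using f unfolding Gamma_def by auto
    obtain m0 where m0: "m0 \<in> M" using Mne by blast
    have Bfin: "B < \<infinity>" unfolding B_def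
    proof (rule fin_int[OF Q fin])
      show "0 \<le> f m0 + norm m0" using fnn[of m0] by simp
      fix v
      have "f v \<le> f m0 + dist v m0" by (rule gamma_ineq[OF f])
      also have "dist v m0 \<le> norm v + norm m0" by (simp add: dist_norm norm_triangle_ineq4)
      finally show "f v \<le> f m0 + norm m0 + norm v" by simp
    qed
    have Dfin: "D < \<infinity>" unfolding D_def
    proof (rule fin_int[OF Q fin])
      show "0 \<le> norm m0" by simp
      fix v
      have "infdist v M \<le> dist v m0" by (rule infdist_le[OF m0])
      also have "dist v m0 \<le> norm v + norm m0" by (simp add: dist_norm norm_triangle_ineq4)
      finally show "infdist v M \<le> norm m0 + norm v" by simp
    qed
    have le1: "B \<le> A + D" unfolding A_def B_def D_def Q_def by (rule K(2)[OF f tau0])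
    have "enn2ereal A - enn2ereal B \<le> - enn2ereal D"
      using opt unfolding A_def B_def D_def Q_def K(1)[OF f tau0] K(3)[OF f tau0] .
    then have le2: "A + D \<le> B" by (rule ereal_aux2[OF Bfin Dfin])
    define h where "h v = f (?\<pi> v) + \<tau> * f (?\<pi> v) powr p + infdist v M - f v" for v
    have pim: "?\<pi> \<in> Q \<rightarrow>\<^sub>M borel"
      unfolding measurable_cong_sets[OF Q(2) refl, of borel]
      by (rule borel_measurable_continuous_onI[OF continuous_on_closest_point[OF assms(6) clM Mne]])
    have fm: "f \<in> borel_measurable Q"
      unfolding measurable_cong_sets[OF Q(2) refl, of borel] by (rule gamma_meas[OF f])
    have dm: "(\<lambda>u. infdist u M) \<in> borel_measurable Q"
      unfolding measurable_cong_sets[OF Q(2) refl, of borel] by (rule gamma_meas[OF infdist_gamma])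
    have fpm: "(\<lambda>u. f (?\<pi> u)) \<in> borel_measurable Q"
      using measurable_compose[OF pim gamma_meas[OF f]] by simp
    have hm: "h \<in> borel_measurable Q" unfolding h_def using fpm fm dm by measurable
    have hnn: "0 \<le> h v" for v
    proof -
      have "f v \<le> f (?\<pi> v) + dist v (?\<pi> v)" by (rule gamma_ineq[OF f])
      moreover have "infdist v M = dist v (?\<pi> v)"
      proof -
        obtain y where y: "y \<in> M" "infdist v M = dist v y" using infdist_attains_inf[OF clM Mne] by blast
        have "dist v (?\<pi> v) \<le> dist v y" using closest_point_le[OF clM y(1)] .
        moreover have "infdist v M \<le> dist v (?\<pi> v)" by (rule infdist_le[OF closest_point_in_set[OF clM Mne]])
        ultimately show ?thesis using y by simp
      qed
      moreover have "0 \<le> \<tau> * f (?\<pi> v) powr p" using tau0 by simp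
      ultimately show ?thesis unfolding h_def by linarith
    qed
    have "(\<integral>\<^sup>+ v. ennreal (h v) \<partial>Q) + B = (\<integral>\<^sup>+ v. ennreal (h v) + ennreal (f v) \<partial>Q)"
      unfolding B_def by (rule nn_integral_add[symmetric]) (use hm fm in simp_all)
    also have "\<dots> = (\<integral>\<^sup>+ v. ennreal (f (?\<pi> v) + \<tau> * f (?\<pi> v) powr p) + ennreal (infdist v M) \<partial>Q)"
    proof (rule nn_integral_cong)
      fix v
      have "ennreal (h v) + ennreal (f v) = ennreal (h v + f v)"
        using hnn fnn by (simp add: ennreal_plus)
      also have "\<dots> = ennreal (f (?\<pi> v) + \<tau> * f (?\<pi> v) powr p + infdist v M)"
        unfolding h_def by simp
      also have "\<dots> = ennreal (f (?\<pi> v) + \<tau> * f (?\<pi> v) powr p) + ennreal (infdist v M)"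
        using fnn tau0 infdist_nonneg by (intro ennreal_plus) auto
      finally show "ennreal (h v) + ennreal (f v) = ennreal (f (?\<pi> v) + \<tau> * f (?\<pi> v) powr p) + ennreal (infdist v M)" .
    qed
    also have "\<dots> = A + D"
      unfolding A_def D_def by (rule nn_integral_add) (use fpm dm in simp_all)
    also have "\<dots> = B" using le1 le2 by simp
    finally have "(\<integral>\<^sup>+ v. ennreal (h v) \<partial>Q) + B = 0 + B" by simp
    then have "(\<integral>\<^sup>+ v. ennreal (h v) \<partial>Q) = 0"
      using Bfin by (metis ennreal_add_left_cancel add.commute less_irrefl)
    then have "AE v in Q. ennreal (h v) = 0"
      by (subst (asm) nn_integral_0_iff_AE) (use hm in simp_all)
    then have AEeq: "AE v in Q. f v = infdist v M"
    proof (rule AE_mp, intro AE_I2 impI)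
      fix v assume "ennreal (h v) = 0"
      then have h0: "h v = 0" using hnn[of v] by simp
      have d: "infdist v M = dist v (?\<pi> v)"
      proof -
        obtain y where y: "y \<in> M" "infdist v M = dist v y" using infdist_attains_inf[OF clM Mne] by blast
        have "dist v (?\<pi> v) \<le> dist v y" using closest_point_le[OF clM y(1)] .
        moreover have "infdist v M \<le> dist v (?\<pi> v)" by (rule infdist_le[OF closest_point_in_set[OF clM Mne]])
        ultimately show ?thesis using y by simp
      qed
      have "f v \<le> f (?\<pi> v) + dist v (?\<pi> v)" by (rule gamma_ineq[OF f])
      then have "\<tau> * f (?\<pi> v) powr p \<le> 0" using h0 d unfolding h_def by linarith
      then have "f (?\<pi> v) powr p \<le> 0" using tau by (simp add: mult_le_0_iff)
      then have "f (?\<pi> v) = 0" using fnn[of "?\<pi> v"] by (metis powr_ge_zero order.antisym powr_eq_0_iff)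
      then show "f v = infdist v M" using h0 unfolding h_def by simp
    qed
    show "f u = infdist u M"
    proof (rule ccontr)
      assume ne: "f u \<noteq> infdist u M"
      define U where "U = {v. f v \<noteq> infdist v M}"
      have "open U" unfolding U_def
        by (rule open_Collect_neq) (use gamma_cont[OF f] gamma_cont[OF infdist_gamma] in auto)
      have sp: "space Q = UNIV" using sets_eq_imp_space_eq[OF Q(2)] by simp
      have Us: "U \<in> sets Q" using \<open>open U\<close> Q(2) by simp
      have "emeasure Q U = 0"
        using AEeq AE_iff_measurable[OF Us] sp unfolding U_def by auto
      moreover have "emeasure Q U > 0"
        using u \<open>open U\<close> ne unfolding support_def Q_def U_def by auto
      ultimately show False by simp
    qed
  qed
qed

end
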